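(* For every $n \geq 2$, the set $\{Der_n\}$ of deranged linear arrangements of $\{1,\ldots,n\}$ is equidistributed.
   Context: A linear arrangement of $\{1,\ldots,n\}$ is a sequence $a_1\cdots a_n$ in which each of $1,\ldots,n$ appears exactly once; it is deranged if $a_t \neq t$ for all $t$. For a set $X$ of linear arrangements of $\{1,\ldots,n\}$ and $i\in\{1,\ldots,n\}$, the class $X^{(i)}$ is the set of arrangements in $X$ whose first entry is $i$. $X$ is called equidistributed if it is partitioned into its nonempty classes and all nonempty classes $X^{(i)}$ have the same cardinality. *)

theory Defs
  imports Main
begin

text \<open>A linear arrangement a_1 ... a_n of {1,...,n} is a list xs of length n
  containing each of 1..n exactly once; a_t corresponds to xs ! (t - 1).\<close>

definition linear_arrangements :: "nat \<Rightarrow> nat list set" where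
  "linear_arrangements n = {xs. length xs = n \<and> distinct xs \<and> set xs = {1..n}}"

definition deranged :: "nat list \<Rightarrow> bool" where
  "deranged xs \<longleftrightarrow> (\<forall>t<length xs. xs ! t \<noteq> t + 1)"

definition Der :: "nat \<Rightarrow> nat list set" where
  "Der n = {xs \<in> linear_arrangements n. deranged xs}"

definition arr_class :: "nat list set \<Rightarrow> nat \<Rightarrow> nat list set" where
  "arr_class X i = {xs \<in> X. xs \<noteq> [] \<and> hd xs = i}"

definition equidistributed :: "nat \<Rightarrow> nat list set \<Rightarrow> bool" where
  "equidistributed n X \<longleftrightarrow>
     X \<subseteq> linear_arrangements n \<and>
     X = \<Union>{arr_class X i | i. i \<in> {1..n} \<and> arr_class X i \<noteq> {}} \<and>
     (\<forall>i\<in>{1..n}. \<forall>j\<in>{1..n}. arr_class X i \<noteq> {} \<longrightarrow> arr_class X j \<noteq> {} \<longrightarrow>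
        card (arr_class X i) = card (arr_class X j))"

end

theory Submission
  imports Defs
begin

definition sw :: "nat \<Rightarrow> nat \<Rightarrow> nat \<Rightarrow> nat" where
  "sw i j x = (if x = i then j else if x = j then i else x)"

lemma sw_sw[simp]: "sw i j (sw i j x) = x" by (simp add: sw_def)
lemma sw_in: "i \<in> {1..n} \<Longrightarrow> j \<in> {1..n} \<Longrightarrow> x \<in> {1..n} \<Longrightarrow> sw i j x \<in> {1..n}"
  by (simp add: sw_def)

definition cj :: "nat \<Rightarrow> nat \<Rightarrow> nat list \<Rightarrow> nat list" where
  "cj i j xs = map (\<lambda>t. sw i j (xs ! (sw i j (t+1) - 1))) [0..<length xs]"

lemma cj_len[simp]: "length (cj i j xs) = length xs" by (simp add: cj_def)
lemma cj_nth: "t < length xs \<Longrightarrow> cj i j xs ! t = sw i j (xs ! (sw i j (t+1) - 1))"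
  by (simp add: cj_def)

lemma cj_props:
  assumes xs: "xs \<in> linear_arrangements n" and i: "i \<in> {1..n}" and j: "j \<in> {1..n}"
  shows "cj i j xs \<in> linear_arrangements n" "cj i j (cj i j xs) = xs"
    "deranged xs \<Longrightarrow> deranged (cj i j xs)"
proof -
  have L: "length xs = n" and D: "distinct xs" and S: "set xs = {1..n}"
    using xs by (auto simp: linear_arrangements_def)
  have idx: "\<And>t. t < n \<Longrightarrow> sw i j (t+1) - 1 < n \<and> sw i j (t+1) \<ge> 1"
  proof -
    fix t assume "t < n"
    hence "t+1 \<in> {1..n}" by simp
    hence "sw i j (t+1) \<in> {1..n}" by (rule sw_in[OF i j])
    thus "sw i j (t+1) - 1 < n \<and> sw i j (t+1) \<ge> 1" by auto
  qed
  have elt: "\<And>m. m < n \<Longrightarrow> xs ! m \<in> {1..n}" using S L nth_mem by blast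
  show inv: "cj i j (cj i j xs) = xs"
  proof (rule nth_equalityI)
    show "length (cj i j (cj i j xs)) = length xs" by simp
    fix t assume "t < length (cj i j (cj i j xs))"
    hence t: "t < n" using L by simp
    have "cj i j (cj i j xs) ! t = sw i j (cj i j xs ! (sw i j (t+1) - 1))"
      using t L by (simp add: cj_nth)
    also have "\<dots> = sw i j (sw i j (xs ! (sw i j (sw i j (t+1) - 1 + 1) - 1)))"
      using idx[OF t] L by (simp add: cj_nth)
    also have "\<dots> = xs ! t" using idx[OF t] by simp
    finally show "cj i j (cj i j xs) ! t = xs ! t" .
  qed
  have sub: "set (cj i j xs) \<subseteq> {1..n}"
  proof
    fix y assume "y \<in> set (cj i j xs)"
    then obtain t where t: "t < n" "y = cj i j xs ! t" using L by (auto simp: in_set_conv_nth)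
    show "y \<in> {1..n}" using t idx[OF t(1)] elt sw_in[OF i j] L by (simp add: cj_nth)
  qed
  have dist: "distinct (cj i j xs)"
  proof (subst distinct_conv_nth, intro allI impI)
    fix a b assume ab: "a < length (cj i j xs)" "b < length (cj i j xs)" "a \<noteq> b"
    hence a: "a < n" and b: "b < n" using L by auto
    show "cj i j xs ! a \<noteq> cj i j xs ! b"
    proof
      assume "cj i j xs ! a = cj i j xs ! b"
      hence "sw i j (xs ! (sw i j (a+1) - 1)) = sw i j (xs ! (sw i j (b+1) - 1))"
        using a b L by (simp add: cj_nth)
      hence "xs ! (sw i j (a+1) - 1) = xs ! (sw i j (b+1) - 1)"
        by (metis sw_sw)
      hence "sw i j (a+1) - 1 = sw i j (b+1) - 1"
        using D idx[OF a] idx[OF b] L nth_eq_iff_index_eq by blast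
      hence "sw i j (a+1) = sw i j (b+1)" using idx[OF a] idx[OF b] by linarith
      hence "a + 1 = b + 1" by (metis sw_sw)
      thus False using ab by simp
    qed
  qed
  have "card (set (cj i j xs)) = n" using dist L distinct_card by fastforce
  hence "set (cj i j xs) = {1..n}" using sub by (simp add: card_subset_eq)
  thus "cj i j xs \<in> linear_arrangements n" using dist L
    by (simp add: linear_arrangements_def)
  assume der: "deranged xs"
  show "deranged (cj i j xs)" unfolding deranged_def
  proof (intro allI impI)
    fix t assume "t < length (cj i j xs)"
    hence t: "t < n" using L by simp
    show "cj i j xs ! t \<noteq> t + 1"
    proof
      assume "cj i j xs ! t = t + 1"
      hence "sw i j (xs ! (sw i j (t+1) - 1)) = t + 1" using t L by (simp add: cj_nth)
      hence "xs ! (sw i j (t+1) - 1) = sw i j (t+1)" by (metis sw_sw)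
      moreover have "xs ! (sw i j (t+1) - 1) \<noteq> sw i j (t+1) - 1 + 1"
        using der idx[OF t] L unfolding deranged_def by blast
      ultimately show False using idx[OF t] by simp
    qed
  qed
qed

lemma class_map:
  assumes n: "n \<ge> 2" and i: "i \<in> {2..n}" and j: "j \<in> {2..n}"
  shows "cj i j ` arr_class (Der n) i \<subseteq> arr_class (Der n) j"
proof
  fix y assume "y \<in> cj i j ` arr_class (Der n) i"
  then obtain xs where xs: "xs \<in> Der n" "xs \<noteq> []" "hd xs = i" "y = cj i j xs"
    by (auto simp: arr_class_def)
  have la: "xs \<in> linear_arrangements n" and der: "deranged xs" using xs(1) by (auto simp: Der_def)
  have ij: "i \<in> {1..n}" "j \<in> {1..n}" using i j by auto
  have L: "length xs = n" using la by (simp add: linear_arrangements_def)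
  have "sw i j 1 = 1" using i j by (simp add: sw_def)
  hence "y ! 0 = sw i j (xs ! 0)" using xs(4) L n cj_nth[of 0 xs i j] by simp
  also have "xs ! 0 = i" using xs(2,3) by (simp add: hd_conv_nth)
  finally have "y ! 0 = j" by (simp add: sw_def)
  moreover have "y \<noteq> []" using xs(4) L n by (auto simp: cj_def)
  moreover have "y \<in> Der n" using cj_props(1,3)[OF la ij] der xs(4) unfolding Der_def by blast
  ultimately show "y \<in> arr_class (Der n) j"
    unfolding arr_class_def by (simp add: hd_conv_nth)
qed

lemma class_card:
  assumes n: "n \<ge> 2" and i: "i \<in> {2..n}" and j: "j \<in> {2..n}"
  shows "card (arr_class (Der n) i) = card (arr_class (Der n) j)"
proof -
  have ij: "i \<in> {1..n}" "j \<in> {1..n}" using i j by auto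
  have inv: "\<And>xs. xs \<in> arr_class (Der n) i \<Longrightarrow> cj i j (cj i j xs) = xs"
    using cj_props(2)[OF _ ij] by (auto simp: arr_class_def Der_def)
  have inj: "inj_on (cj i j) (arr_class (Der n) i)" by (metis inj_onI inv)
  have "cj i j ` arr_class (Der n) i = arr_class (Der n) j"
  proof
    show "cj i j ` arr_class (Der n) i \<subseteq> arr_class (Der n) j" by (rule class_map[OF n i j])
    show "arr_class (Der n) j \<subseteq> cj i j ` arr_class (Der n) i"
    proof
      fix y assume y: "y \<in> arr_class (Der n) j"
      have "cj j i y \<in> arr_class (Der n) i" using class_map[OF n j i] y by blast
      moreover have "cj j i y = cj i j y"
      proof -
        have "sw j i = sw i j" by (rule ext) (simp add: sw_def)
        thus ?thesis by (simp add: cj_def)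
      qed
      moreover have "cj i j (cj i j y) = y"
        using cj_props(2)[OF _ ij] y by (auto simp: arr_class_def Der_def)
      ultimately show "y \<in> cj i j ` arr_class (Der n) i" by (metis image_eqI)
    qed
  qed
  thus ?thesis using card_image[OF inj] by simp
qed

theorem proposition4p5:
  fixes n :: nat
  assumes "n \<ge> 2"
  shows "equidistributed n (Der n)"
proof -
  have c1: "arr_class (Der n) 1 = {}"
  proof (rule ccontr)
    assume "arr_class (Der n) 1 \<noteq> {}"
    then obtain xs where "xs \<in> Der n" "xs \<noteq> []" "hd xs = 1" by (auto simp: arr_class_def)
    hence "deranged xs" "xs ! 0 = 1" "length xs > 0" by (auto simp: Der_def hd_conv_nth)
    thus False unfolding deranged_def by auto
  qed
  have A: "Der n \<subseteq> linear_arrangements n" by (auto simp: Der_def)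
  have B: "Der n = \<Union>{arr_class (Der n) i | i. i \<in> {1..n} \<and> arr_class (Der n) i \<noteq> {}}"
  proof
    show "Der n \<subseteq> \<Union>{arr_class (Der n) i | i. i \<in> {1..n} \<and> arr_class (Der n) i \<noteq> {}}"
    proof
      fix xs assume xs: "xs \<in> Der n"
      hence L: "length xs = n" and S: "set xs = {1..n}" by (auto simp: Der_def linear_arrangements_def)
      hence ne: "xs \<noteq> []" using assms by auto
      hence "hd xs \<in> {1..n}" using S hd_in_set by blast
      moreover have "xs \<in> arr_class (Der n) (hd xs)" using xs ne by (simp add: arr_class_def)
      ultimately show "xs \<in> \<Union>{arr_class (Der n) i | i. i \<in> {1..n} \<and> arr_class (Der n) i \<noteq> {}}"
        by (intro UnionI[of "arr_class (Der n) (hd xs)"]) auto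
    qed
    show "\<Union>{arr_class (Der n) i | i. i \<in> {1..n} \<and> arr_class (Der n) i \<noteq> {}} \<subseteq> Der n"
      unfolding arr_class_def by blast
  qed
  have C: "\<forall>i\<in>{1..n}. \<forall>j\<in>{1..n}. arr_class (Der n) i \<noteq> {} \<longrightarrow> arr_class (Der n) j \<noteq> {} \<longrightarrow>
        card (arr_class (Der n) i) = card (arr_class (Der n) j)"
  proof (intro ballI impI)
    fix i j assume i: "i \<in> {1..n}" and j: "j \<in> {1..n}"
      and ni: "arr_class (Der n) i \<noteq> {}" and nj: "arr_class (Der n) j \<noteq> {}"
    have "i \<noteq> 1" "j \<noteq> 1" using ni nj c1 by auto
    thus "card (arr_class (Der n) i) = card (arr_class (Der n) j)"
      using class_card[OF assms, of i j] i j by simp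
  qed
  show ?thesis unfolding equidistributed_def using A B C by blast
qed

end
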